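(* Let $R$ be a commutative ring and let $(A,d)$ be a differential graded $R$-algebra. If the graded algebra $\ker(d)$ is graded-Artinian, then $(A,d)$ is dg-Noetherian and dg-Artinian.
   Context: A differential graded (dg) $R$-algebra $(A,d)$ is a $\mathbb{Z}$-graded $R$-algebra $A$ with an $R$-linear endomorphism $d$, homogeneous of degree $1$, with $d^2=0$ and $d(ab)=d(a)b+(-1)^{|a|}a\,d(b)$ for homogeneous $a,b$. Then $\ker(d)$ is a graded subalgebra of $A$. A graded algebra is graded-Artinian if it satisfies the descending chain condition on graded ideals. A dg-ideal of $(A,d)$ is a graded ideal $I$ with $d(I)\subseteq I$; $(A,d)$ is dg-Noetherian (resp. dg-Artinian) if it satisfies the ascending (resp. descending) chain condition on dg-ideals (i.e. on dg-submodules of $A$ viewed as a dg-module over itself). *)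

theory Defs
  imports Main
begin

definition graded_decomp :: "(int \<Rightarrow> 'a::ring_1 set) \<Rightarrow> 'a \<Rightarrow> (int \<Rightarrow> 'a) \<Rightarrow> bool" where
  "graded_decomp G a c \<longleftrightarrow>
     finite {n. c n \<noteq> 0} \<and> (\<forall>n. c n \<in> G n) \<and> a = (\<Sum>n\<in>{n. c n \<noteq> 0}. c n)"

definition graded_ring :: "(int \<Rightarrow> 'a::ring_1 set) \<Rightarrow> bool" where
  "graded_ring G \<longleftrightarrow>
     (\<forall>n. 0 \<in> G n \<and> (\<forall>x\<in>G n. \<forall>y\<in>G n. x + y \<in> G n) \<and> (\<forall>x\<in>G n. - x \<in> G n)) \<and>
     (\<forall>a. \<exists>c. graded_decomp G a c) \<and>
     (\<forall>c. finite {n. c n \<noteq> 0} \<and> (\<forall>n. c n \<in> G n) \<and> (\<Sum>n\<in>{n. c n \<noteq> 0}. c n) = 0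
          \<longrightarrow> (\<forall>n. c n = 0)) \<and>
     (\<forall>m n. \<forall>x\<in>G m. \<forall>y\<in>G n. x * y \<in> G (m + n)) \<and>
     1 \<in> G 0"

definition graded_algebra :: "('r::comm_ring_1 \<Rightarrow> 'a::ring_1) \<Rightarrow> (int \<Rightarrow> 'a set) \<Rightarrow> bool" where
  "graded_algebra phi G \<longleftrightarrow>
     graded_ring G \<and>
     phi 1 = 1 \<and> (\<forall>r s. phi (r + s) = phi r + phi s) \<and> (\<forall>r s. phi (r * s) = phi r * phi s) \<and>
     (\<forall>r a. phi r * a = a * phi r) \<and>
     (\<forall>r n. \<forall>x\<in>G n. phi r * x \<in> G n)"

definition dg_algebra :: "('r::comm_ring_1 \<Rightarrow> 'a::ring_1) \<Rightarrow> (int \<Rightarrow> 'a set) \<Rightarrow> ('a \<Rightarrow> 'a) \<Rightarrow> bool" where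
  "dg_algebra phi G d \<longleftrightarrow>
     graded_algebra phi G \<and>
     (\<forall>a b. d (a + b) = d a + d b) \<and>
     (\<forall>r a. d (phi r * a) = phi r * d a) \<and>
     (\<forall>n. \<forall>x\<in>G n. d x \<in> G (n + 1)) \<and>
     (\<forall>a. d (d a) = 0) \<and>
     (\<forall>n a b. a \<in> G n \<longrightarrow> d (a * b) = d a * b + (if even n then a * d b else - (a * d b)))"

definition graded_left_ideal :: "(int \<Rightarrow> 'a::ring_1 set) \<Rightarrow> 'a set \<Rightarrow> 'a set \<Rightarrow> bool" where
  "graded_left_ideal G S I \<longleftrightarrow>
     I \<subseteq> S \<and> 0 \<in> I \<and> (\<forall>x\<in>I. \<forall>y\<in>I. x + y \<in> I) \<and> (\<forall>x\<in>I. - x \<in> I) \<and>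
     (\<forall>s\<in>S. \<forall>x\<in>I. s * x \<in> I) \<and>
     (\<forall>a\<in>I. \<forall>c. graded_decomp (\<lambda>n. G n \<inter> S) a c \<longrightarrow> (\<forall>n. c n \<in> I))"

definition graded_artinian :: "(int \<Rightarrow> 'a::ring_1 set) \<Rightarrow> 'a set \<Rightarrow> bool" where
  "graded_artinian G S \<longleftrightarrow>
     (\<forall>f :: nat \<Rightarrow> 'a set. (\<forall>k. graded_left_ideal G S (f k)) \<and> (\<forall>k. f (Suc k) \<subseteq> f k)
        \<longrightarrow> (\<exists>N. \<forall>k\<ge>N. f k = f N))"

text \<open>dg-ideals: graded left ideals stable under d (= dg-submodules of A over itself).\<close>

definition dg_ideal :: "(int \<Rightarrow> 'a::ring_1 set) \<Rightarrow> ('a \<Rightarrow> 'a) \<Rightarrow> 'a set \<Rightarrow> bool" where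
  "dg_ideal G d I \<longleftrightarrow> graded_left_ideal G UNIV I \<and> (\<forall>x\<in>I. d x \<in> I)"

definition dg_noetherian :: "(int \<Rightarrow> 'a::ring_1 set) \<Rightarrow> ('a \<Rightarrow> 'a) \<Rightarrow> bool" where
  "dg_noetherian G d \<longleftrightarrow>
     (\<forall>f :: nat \<Rightarrow> 'a set. (\<forall>k. dg_ideal G d (f k)) \<and> (\<forall>k. f k \<subseteq> f (Suc k))
        \<longrightarrow> (\<exists>N. \<forall>k\<ge>N. f k = f N))"

definition dg_artinian :: "(int \<Rightarrow> 'a::ring_1 set) \<Rightarrow> ('a \<Rightarrow> 'a) \<Rightarrow> bool" where
  "dg_artinian G d \<longleftrightarrow>
     (\<forall>f :: nat \<Rightarrow> 'a set. (\<forall>k. dg_ideal G d (f k)) \<and> (\<forall>k. f (Suc k) \<subseteq> f k)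
        \<longrightarrow> (\<exists>N. \<forall>k\<ge>N. f k = f N))"

end

theory Submission
  imports Defs
begin


locale grs =
  fixes G :: "int \<Rightarrow> 'a::ring_1 set" and S :: "'a set"
  assumes gr: "graded_ring G"
  and S1: "1 \<in> S" and Sadd: "x\<in>S \<Longrightarrow> y\<in>S \<Longrightarrow> x+y \<in> S"
  and Sneg: "x \<in> S \<Longrightarrow> -x \<in> S" and Smul: "x\<in>S \<Longrightarrow> y\<in>S \<Longrightarrow> x*y\<in>S"
  and Sdec: "a \<in> S \<Longrightarrow> \<exists>c. graded_decomp (\<lambda>n. G n \<inter> S) a c"
begin

definition H where "H n = G n \<inter> S"
definition cmp where "cmp n a = (SOME c. graded_decomp H a c) n"

lemma H_eq: "(\<lambda>n. G n \<inter> S) = H" by (auto simp: H_def)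

lemma G0: "0 \<in> G n" using gr unfolding graded_ring_def by blast
lemma Gadd: "x \<in> G n \<Longrightarrow> y \<in> G n \<Longrightarrow> x + y \<in> G n" using gr unfolding graded_ring_def by blast
lemma Gneg: "x \<in> G n \<Longrightarrow> - x \<in> G n" using gr unfolding graded_ring_def by blast
lemma Gmul: "x \<in> G m \<Longrightarrow> y \<in> G n \<Longrightarrow> x * y \<in> G (m + n)" using gr unfolding graded_ring_def by blast
lemma G1: "1 \<in> G 0" using gr unfolding graded_ring_def by blast
lemma Guniq: "finite {n. c n \<noteq> 0} \<Longrightarrow> (\<forall>n. c n \<in> G n) \<Longrightarrow> sum c {n. c n \<noteq> 0} = 0 \<Longrightarrow> c n = 0"
  using gr unfolding graded_ring_def by blast

lemma S0: "0 \<in> S" using Sadd[OF S1 Sneg[OF S1]] by simp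
lemma Sdiff: "x\<in>S \<Longrightarrow> y\<in>S \<Longrightarrow> x-y \<in> S" using Sadd Sneg by (metis diff_conv_add_uminus)
lemma Ssum: "finite A \<Longrightarrow> (\<forall>i\<in>A. f i \<in> S) \<Longrightarrow> sum f A \<in> S"
  by (induction A rule: finite_induct) (auto intro: S0 Sadd)

lemma H0: "0 \<in> H n" using G0 S0 by (simp add: H_def)
lemma Hadd: "x \<in> H n \<Longrightarrow> y \<in> H n \<Longrightarrow> x + y \<in> H n" using Gadd Sadd by (simp add: H_def)
lemma Hneg: "x \<in> H n \<Longrightarrow> - x \<in> H n" using Gneg Sneg by (simp add: H_def)
lemma Hdiff: "x \<in> H n \<Longrightarrow> y \<in> H n \<Longrightarrow> x - y \<in> H n" using Hadd Hneg by (metis diff_conv_add_uminus)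
lemma Hmul: "x \<in> H m \<Longrightarrow> y \<in> H n \<Longrightarrow> x * y \<in> H (m + n)" using Gmul Smul by (simp add: H_def)
lemma H1: "1 \<in> H 0" using G1 S1 by (simp add: H_def)
lemma HS: "x \<in> H n \<Longrightarrow> x \<in> S" by (simp add: H_def)
lemma HG: "x \<in> H n \<Longrightarrow> x \<in> G n" by (simp add: H_def)

lemma sum_supp:
  assumes "finite U" "\<And>n. n \<notin> U \<Longrightarrow> c n = 0"
  shows "sum c {n. c n \<noteq> 0} = sum c U"
  by (rule sum.mono_neutral_left) (use assms in auto)

lemma decomp_unique:
  fixes c c' :: "int \<Rightarrow> 'a"
  assumes "finite U" "\<And>n. n\<notin>U \<Longrightarrow> c n = 0" "\<And>n. c n \<in> G n"
    "finite V" "\<And>n. n\<notin>V \<Longrightarrow> c' n = 0" "\<And>n. c' n \<in> G n"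
    "sum c U = sum c' V"
  shows "c n = c' n"
proof -
  define e where "e = (\<lambda>n. c n - c' n)"
  have fin: "finite (U \<union> V)" using assms(1,4) by simp
  have z: "\<And>n. n \<notin> U \<union> V \<Longrightarrow> e n = 0" using assms(2,5) by (simp add: e_def)
  have "{n. e n \<noteq> 0} \<subseteq> U \<union> V" using z by blast
  hence f1: "finite {n. e n \<noteq> 0}" using fin finite_subset by blast
  have f2: "\<forall>n. e n \<in> G n" unfolding e_def diff_conv_add_uminus using Gadd[OF assms(3) Gneg[OF assms(6)]] by blast
  have "sum c U = sum c (U \<union> V)"
    by (rule sum.mono_neutral_left) (use assms(1,2,4) in auto)
  moreover have "sum c' V = sum c' (U \<union> V)"
    by (rule sum.mono_neutral_left) (use assms(1,4,5) in auto)
  ultimately have "sum e (U \<union> V) = 0" using assms(7) by (simp add: e_def sum_subtractf)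
  hence "sum e {n. e n \<noteq> 0} = 0" using sum_supp[OF fin z] by simp
  hence "e n = 0" using Guniq[OF f1 f2] by blast
  thus ?thesis by (simp add: e_def)
qed

lemma comp_ex: "a \<in> S \<Longrightarrow> graded_decomp H a (\<lambda>n. cmp n a)"
proof -
  assume "a \<in> S"
  then obtain c where "graded_decomp H a c" using Sdec H_eq by metis
  hence "graded_decomp H a (SOME c. graded_decomp H a c)" using someI_ex[of "\<lambda>c. graded_decomp H a c"] by blast
  moreover have "(\<lambda>n. cmp n a) = (SOME c. graded_decomp H a c)" by (rule ext) (simp add: cmp_def)
  ultimately show ?thesis by simp
qed

lemma comp_H: "a \<in> S \<Longrightarrow> cmp n a \<in> H n"
  using comp_ex unfolding graded_decomp_def by blast
lemma comp_S: "a \<in> S \<Longrightarrow> cmp n a \<in> S"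
  using comp_H HS by blast
lemma comp_fin: "a \<in> S \<Longrightarrow> finite {n. cmp n a \<noteq> 0}"
  using comp_ex unfolding graded_decomp_def by blast

lemma comp_sum: assumes "a \<in> S" "finite U" "{n. cmp n a \<noteq> 0} \<subseteq> U"
  shows "a = sum (\<lambda>n. cmp n a) U"
proof -
  have "a = sum (\<lambda>n. cmp n a) {n. cmp n a \<noteq> 0}" using comp_ex[OF assms(1)] unfolding graded_decomp_def by blast
  also have "\<dots> = sum (\<lambda>n. cmp n a) U"
    by (rule sum.mono_neutral_left) (use assms in auto)
  finally show ?thesis .
qed

lemma decomp_intro:
  assumes "finite U" "\<And>n. n \<notin> U \<Longrightarrow> c n = 0" "\<And>n. c n \<in> H n" "a = sum c U"
  shows "cmp n a = c n"
proof -
  have aS: "a \<in> S" using assms Ssum HS by blast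
  show ?thesis
  proof (rule decomp_unique[where c="\<lambda>n. cmp n a" and c'=c and U="{n. cmp n a \<noteq> 0}" and V=U])
    show "finite {n. cmp n a \<noteq> 0}" using comp_fin[OF aS] .
    show "\<And>n. cmp n a \<in> G n" using comp_H[OF aS] HG by blast
    show "\<And>n. c n \<in> G n" using assms HG by blast
    show "sum (\<lambda>n. cmp n a) {n. cmp n a \<noteq> 0} = sum c U"
      using comp_ex[OF aS] assms(4) unfolding graded_decomp_def by simp
    show "finite U" by (rule assms(1))
    show "\<And>n. n \<notin> U \<Longrightarrow> c n = 0" by (rule assms(2))
    show "\<And>n. n \<notin> {n. cmp n a \<noteq> 0} \<Longrightarrow> cmp n a = 0" by simp
  qed
qed

lemma comp_hom: "x \<in> H k \<Longrightarrow> cmp n x = (if n = k then x else 0)"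
  by (rule decomp_intro[where c="\<lambda>n. if n = k then x else 0" and U="{k}"]) (auto intro: H0)

lemma comp_zero: "cmp n 0 = 0"
  using comp_hom[OF H0[of 0]] by simp

lemma comp_add: assumes "a \<in> S" "b \<in> S" shows "cmp n (a + b) = cmp n a + cmp n b"
proof (rule decomp_intro[where c="\<lambda>n. cmp n a + cmp n b" and U="{n. cmp n a \<noteq> 0} \<union> {n. cmp n b \<noteq> 0}"])
  show "finite ({n. cmp n a \<noteq> 0} \<union> {n. cmp n b \<noteq> 0})" using comp_fin assms by simp
  show "\<And>n. cmp n a + cmp n b \<in> H n" using comp_H assms Hadd by blast
  show "a + b = (\<Sum>n\<in>{n. cmp n a \<noteq> 0} \<union> {n. cmp n b \<noteq> 0}. cmp n a + cmp n b)"
    by (simp add: sum.distrib comp_sum[OF assms(1), symmetric] comp_sum[OF assms(2), symmetric] comp_fin assms)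
qed auto

lemma comp_neg: assumes "a \<in> S" shows "cmp n (- a) = - cmp n a"
proof (rule decomp_intro[where c="\<lambda>n. - cmp n a" and U="{n. cmp n a \<noteq> 0}"])
  show "\<And>n. - cmp n a \<in> H n" using comp_H assms Hneg by blast
  show "- a = (\<Sum>n\<in>{n. cmp n a \<noteq> 0}. - cmp n a)"
    by (simp add: sum_negf comp_sum[OF assms(1), symmetric] comp_fin assms)
qed (auto simp: comp_fin assms)

lemma comp_diff: assumes "a \<in> S" "b \<in> S" shows "cmp n (a - b) = cmp n a - cmp n b"
  using comp_add[OF assms(1) Sneg[OF assms(2)]] comp_neg[OF assms(2)] by (simp only: diff_conv_add_uminus)

lemma comp_multR: assumes "a \<in> S" "x \<in> H k" shows "cmp n (a * x) = cmp (n - k) a * x"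
proof (rule decomp_intro[where c="\<lambda>n. cmp (n - k) a * x" and U="(\<lambda>m. m + k) ` {n. cmp n a \<noteq> 0}"])
  show "finite ((\<lambda>m. m + k) ` {n. cmp n a \<noteq> 0})" using comp_fin assms by simp
  show "\<And>n. n \<notin> (\<lambda>m. m + k) ` {n. cmp n a \<noteq> 0} \<Longrightarrow> cmp (n - k) a * x = 0"
    by (metis (mono_tags) diff_add_cancel image_eqI mem_Collect_eq mult_zero_left)
  show "\<And>n. cmp (n - k) a * x \<in> H n" using Hmul[OF comp_H[OF assms(1)] assms(2)] by (metis diff_add_cancel)
  have "(\<Sum>n\<in>(\<lambda>m. m + k) ` {n. cmp n a \<noteq> 0}. cmp (n - k) a * x) = (\<Sum>m\<in>{n. cmp n a \<noteq> 0}. cmp m a * x)"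
    by (subst sum.reindex) (auto simp: inj_on_def)
  also have "\<dots> = (\<Sum>m\<in>{n. cmp n a \<noteq> 0}. cmp m a) * x" by (simp add: sum_distrib_right)
  also have "\<dots> = a * x" using comp_sum[OF assms(1) comp_fin[OF assms(1)] subset_refl] by simp
  finally show "a * x = (\<Sum>n\<in>(\<lambda>m. m + k) ` {n. cmp n a \<noteq> 0}. cmp (n - k) a * x)" by simp
qed

lemma comp_one: "cmp 0 1 = 1" using comp_hom[OF H1] by simp

end


context grs begin

lemma comp_sumf: "finite A \<Longrightarrow> (\<forall>i\<in>A. f i \<in> S) \<Longrightarrow> cmp n (sum f A) = (\<Sum>i\<in>A. cmp n (f i))"
proof (induction A rule: finite_induct)
  case empty then show ?case by (simp add: comp_zero)
next
  case (insert x F)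
  then show ?case by (simp add: comp_add Ssum)
qed

definition lideal :: "'a set \<Rightarrow> bool" where
  "lideal I \<longleftrightarrow> I \<subseteq> S \<and> 0 \<in> I \<and> (\<forall>x\<in>I. \<forall>y\<in>I. x + y \<in> I) \<and> (\<forall>s\<in>S. \<forall>x\<in>I. s * x \<in> I)"
definition gl :: "'a set \<Rightarrow> bool" where
  "gl I \<longleftrightarrow> lideal I \<and> (\<forall>a\<in>I. \<forall>n. cmp n a \<in> I)"

lemma lideal_S: "lideal I \<Longrightarrow> x \<in> I \<Longrightarrow> x \<in> S" unfolding lideal_def by blast
lemma lideal_0: "lideal I \<Longrightarrow> 0 \<in> I" unfolding lideal_def by blast
lemma lideal_add: "lideal I \<Longrightarrow> x \<in> I \<Longrightarrow> y \<in> I \<Longrightarrow> x + y \<in> I" unfolding lideal_def by blast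
lemma lideal_mul: "lideal I \<Longrightarrow> s \<in> S \<Longrightarrow> x \<in> I \<Longrightarrow> s * x \<in> I" unfolding lideal_def by blast
lemma lideal_neg: "lideal I \<Longrightarrow> x \<in> I \<Longrightarrow> - x \<in> I"
  using lideal_mul[of I "-1" x] Sneg[OF S1] by simp
lemma lideal_diff: "lideal I \<Longrightarrow> x \<in> I \<Longrightarrow> y \<in> I \<Longrightarrow> x - y \<in> I"
  using lideal_add lideal_neg by (metis diff_conv_add_uminus)
lemma lideal_sum: assumes "lideal I" shows "finite A \<Longrightarrow> (\<forall>i\<in>A. f i \<in> I) \<Longrightarrow> sum f A \<in> I"
proof (induction A rule: finite_induct)
  case empty then show ?case using lideal_0[OF assms] by simp
next
  case (insert x F) then show ?case using lideal_add[OF assms] by simp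
qed
lemma gl_lideal: "gl I \<Longrightarrow> lideal I" unfolding gl_def by blast
lemma gl_comp: "gl I \<Longrightarrow> a \<in> I \<Longrightarrow> cmp n a \<in> I" unfolding gl_def by blast

lemma lideal_of_comps: assumes "lideal I" "a \<in> S" "\<And>n. cmp n a \<in> I" shows "a \<in> I"
proof -
  have "a = sum (\<lambda>n. cmp n a) {n. cmp n a \<noteq> 0}" using comp_sum[OF assms(2) comp_fin[OF assms(2)]] by simp
  also have "\<dots> \<in> I" by (rule lideal_sum[OF assms(1) comp_fin[OF assms(2)]]) (use assms(3) in blast)
  finally show ?thesis .
qed

lemma gl_eq: "graded_left_ideal G S I \<longleftrightarrow> gl I"
proof
  assume a: "graded_left_ideal G S I"
  have l: "lideal I" using a unfolding graded_left_ideal_def lideal_def by blast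
  moreover have "\<forall>x\<in>I. \<forall>n. cmp n x \<in> I"
  proof (intro ballI allI)
    fix x n assume "x \<in> I"
    hence "x \<in> S" using l lideal_S by blast
    thus "cmp n x \<in> I" using a comp_ex \<open>x \<in> I\<close> unfolding graded_left_ideal_def H_eq by blast
  qed
  ultimately show "gl I" unfolding gl_def by blast
next
  assume g: "gl I"
  hence l: "lideal I" by (rule gl_lideal)
  have "\<forall>x\<in>I. - x \<in> I" using lideal_neg[OF l] by blast
  moreover have "\<forall>a\<in>I. \<forall>c. graded_decomp H a c \<longrightarrow> (\<forall>n. c n \<in> I)"
  proof (intro ballI allI impI)
    fix a c n assume "a \<in> I" "graded_decomp H a c"
    hence d: "finite {n. c n \<noteq> 0}" "\<And>n. c n \<in> H n" "a = sum c {n. c n \<noteq> 0}" unfolding graded_decomp_def by auto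
    have "cmp n a = c n" by (rule decomp_intro[where c=c and U="{n. c n \<noteq> 0}"]) (use d in auto)
    thus "c n \<in> I" using gl_comp[OF g \<open>a \<in> I\<close>, of n] by simp
  qed
  ultimately show "graded_left_ideal G S I" using l unfolding graded_left_ideal_def H_eq lideal_def by blast
qed

lemma gl_S: "gl S"
  unfolding gl_def lideal_def using S0 Sadd Smul comp_S by blast

lemma gl_Int: "gl A \<Longrightarrow> gl B \<Longrightarrow> gl (A \<inter> B)"
  unfolding gl_def lideal_def by blast

lemma gl_Inter: "\<forall>M\<in>\<M>. gl M \<Longrightarrow> gl (S \<inter> \<Inter>\<M>)"
  unfolding gl_def lideal_def using S0 Sadd Smul comp_S by auto

lemma gl_chain_Union:
  assumes "C \<noteq> {}" "\<And>X Y. X \<in> C \<Longrightarrow> Y \<in> C \<Longrightarrow> X \<subseteq> Y \<or> Y \<subseteq> X" "\<And>X. X \<in> C \<Longrightarrow> gl X"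
  shows "gl (\<Union>C)"
proof -
  have "\<Union>C \<subseteq> S" using assms(3) unfolding gl_def lideal_def by blast
  moreover have "0 \<in> \<Union>C" using assms(1,3) unfolding gl_def lideal_def by blast
  moreover have "\<forall>x\<in>\<Union>C. \<forall>y\<in>\<Union>C. x + y \<in> \<Union>C"
  proof (intro ballI)
    fix x y assume "x \<in> \<Union>C" "y \<in> \<Union>C"
    then obtain X Y where "X \<in> C" "Y \<in> C" "x \<in> X" "y \<in> Y" by blast
    then show "x + y \<in> \<Union>C" using assms(2)[of X Y] assms(3) lideal_add gl_lideal by blast
  qed
  moreover have "\<forall>s\<in>S. \<forall>x\<in>\<Union>C. s * x \<in> \<Union>C" using assms(3) lideal_mul gl_lideal by blast
  moreover have "\<forall>a\<in>\<Union>C. \<forall>n. cmp n a \<in> \<Union>C" using assms(3) gl_comp by blast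
  ultimately show ?thesis unfolding gl_def lideal_def by blast
qed

definition setsum :: "'a set \<Rightarrow> 'a set \<Rightarrow> 'a set" where
  "setsum A B = {a + b | a b. a \<in> A \<and> b \<in> B}"

lemma gl_setsum: assumes "gl A" "gl B" shows "gl (setsum A B)"
proof -
  have lA: "lideal A" and lB: "lideal B" using assms gl_lideal by auto
  have "setsum A B \<subseteq> S" using lA lB lideal_S Sadd unfolding setsum_def by blast
  moreover have "0 \<in> setsum A B" using lA lB lideal_0 unfolding setsum_def by force
  moreover have "\<forall>x\<in>setsum A B. \<forall>y\<in>setsum A B. x + y \<in> setsum A B"
  proof (intro ballI)
    fix x y assume "x \<in> setsum A B" "y \<in> setsum A B"
    then obtain a b a' b' where "x = a + b" "y = a' + b'" "a \<in> A" "b \<in> B" "a' \<in> A" "b' \<in> B"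
      unfolding setsum_def by blast
    moreover have "a + b + (a' + b') = (a + a') + (b + b')" by (simp add: algebra_simps)
    moreover have "a + a' \<in> A" "b + b' \<in> B" using lideal_add[OF lA] lideal_add[OF lB] calculation by auto
    ultimately show "x + y \<in> setsum A B" unfolding setsum_def by blast
  qed
  moreover have "\<forall>s\<in>S. \<forall>x\<in>setsum A B. s * x \<in> setsum A B"
  proof (intro ballI)
    fix s x assume "s \<in> S" "x \<in> setsum A B"
    then obtain a b where "x = a + b" "a \<in> A" "b \<in> B" unfolding setsum_def by blast
    thus "s * x \<in> setsum A B" using lideal_mul[OF lA \<open>s \<in> S\<close>] lideal_mul[OF lB \<open>s \<in> S\<close>]
      unfolding setsum_def by (auto simp: distrib_left)
  qed
  moreover have "\<forall>x\<in>setsum A B. \<forall>n. cmp n x \<in> setsum A B"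
  proof (intro ballI allI)
    fix x n assume "x \<in> setsum A B"
    then obtain a b where "x = a + b" "a \<in> A" "b \<in> B" unfolding setsum_def by blast
    thus "cmp n x \<in> setsum A B" using comp_add[OF lideal_S[OF lA] lideal_S[OF lB]] gl_comp assms
      unfolding setsum_def by blast
  qed
  ultimately show ?thesis unfolding gl_def lideal_def by blast
qed

lemma setsum_mono: "A \<subseteq> A' \<Longrightarrow> B \<subseteq> B' \<Longrightarrow> setsum A B \<subseteq> setsum A' B'"
  unfolding setsum_def by blast
lemma setsum_left: "lideal B \<Longrightarrow> A \<subseteq> setsum A B"
  unfolding setsum_def using lideal_0 by force
lemma setsum_right: "lideal A \<Longrightarrow> B \<subseteq> setsum A B"
  unfolding setsum_def using lideal_0 by force
lemma setsum_sub: "lideal C \<Longrightarrow> A \<subseteq> C \<Longrightarrow> B \<subseteq> C \<Longrightarrow> setsum A B \<subseteq> C"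
  unfolding setsum_def using lideal_add by blast

definition lmul :: "'a set \<Rightarrow> 'a \<Rightarrow> 'a set" where
  "lmul A x = {a * x | a. a \<in> A}"

lemma gl_lmul: assumes "gl A" "x \<in> H k" shows "gl (lmul A x)"
proof -
  have lA: "lideal A" using assms gl_lideal by auto
  have xS: "x \<in> S" using assms HS by blast
  have "lmul A x \<subseteq> S" using lA lideal_S Smul xS unfolding lmul_def by blast
  moreover have "0 \<in> lmul A x" using lA lideal_0 unfolding lmul_def by force
  moreover have "\<forall>y\<in>lmul A x. \<forall>z\<in>lmul A x. y + z \<in> lmul A x"
    using lideal_add[OF lA] unfolding lmul_def by (force simp: distrib_right[symmetric])
  moreover have "\<forall>s\<in>S. \<forall>y\<in>lmul A x. s * y \<in> lmul A x"
    using lideal_mul[OF lA] unfolding lmul_def by (force simp: mult.assoc[symmetric])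
  moreover have "\<forall>y\<in>lmul A x. \<forall>n. cmp n y \<in> lmul A x"
  proof (intro ballI allI)
    fix y n assume "y \<in> lmul A x"
    then obtain a where "y = a * x" "a \<in> A" unfolding lmul_def by blast
    thus "cmp n y \<in> lmul A x" using comp_multR[OF lideal_S[OF lA] assms(2)] gl_comp[OF assms(1)]
      unfolding lmul_def by blast
  qed
  ultimately show ?thesis unfolding gl_def lideal_def by blast
qed

lemma lmul_sub: "lideal K \<Longrightarrow> A \<subseteq> S \<Longrightarrow> x \<in> K \<Longrightarrow> lmul A x \<subseteq> K"
  unfolding lmul_def using lideal_mul by blast

definition colon :: "'a set \<Rightarrow> 'a \<Rightarrow> 'a set" where
  "colon K z = {r \<in> S. r * z \<in> K}"

lemma gl_colon: assumes "gl K" "z \<in> H k" shows "gl (colon K z)"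
proof -
  have lK: "lideal K" using assms gl_lideal by auto
  have "colon K z \<subseteq> S" unfolding colon_def by blast
  moreover have "0 \<in> colon K z" using lK lideal_0 S0 unfolding colon_def by force
  moreover have "\<forall>y\<in>colon K z. \<forall>w\<in>colon K z. y + w \<in> colon K z"
    using lideal_add[OF lK] Sadd unfolding colon_def by (force simp: distrib_right)
  moreover have "\<forall>s\<in>S. \<forall>y\<in>colon K z. s * y \<in> colon K z"
    using lideal_mul[OF lK] Smul unfolding colon_def by (force simp: mult.assoc)
  moreover have "\<forall>y\<in>colon K z. \<forall>n. cmp n y \<in> colon K z"
  proof (intro ballI allI)
    fix y n assume "y \<in> colon K z"
    hence yS: "y \<in> S" and "y * z \<in> K" unfolding colon_def by auto
    hence "cmp (n + k) (y * z) \<in> K" using gl_comp[OF assms(1)] by blast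
    moreover have "cmp (n + k) (y * z) = cmp n y * z" using comp_multR[OF yS assms(2)] by simp
    ultimately show "cmp n y \<in> colon K z" using comp_S[OF yS] unfolding colon_def by simp
  qed
  ultimately show ?thesis unfolding gl_def lideal_def by blast
qed

definition hom :: "'a \<Rightarrow> bool" where "hom x \<longleftrightarrow> (\<exists>k. x \<in> H k)"

inductive_set lspan :: "'a set \<Rightarrow> 'a set" for X where
  lspan_0: "0 \<in> lspan X"
| lspan_gen: "s \<in> S \<Longrightarrow> x \<in> X \<Longrightarrow> s * x \<in> lspan X"
| lspan_add: "a \<in> lspan X \<Longrightarrow> b \<in> lspan X \<Longrightarrow> a + b \<in> lspan X"

lemma lspan_least: assumes "lideal I" "X \<subseteq> I" shows "lspan X \<subseteq> I"
proof
  fix a assume "a \<in> lspan X"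
  then show "a \<in> I"
    by (induction rule: lspan.induct) (use assms lideal_0 lideal_mul lideal_add in blast)+
qed

lemma lspan_S: assumes "X \<subseteq> S" shows "a \<in> lspan X \<Longrightarrow> a \<in> S"
  by (induction rule: lspan.induct) (use assms in \<open>auto intro: S0 Smul Sadd\<close>)

lemma lspan_lmul: assumes "X \<subseteq> S" "s \<in> S" shows "a \<in> lspan X \<Longrightarrow> s * a \<in> lspan X"
proof (induction rule: lspan.induct)
  case lspan_0 then show ?case by (simp add: lspan.lspan_0)
next
  case (lspan_gen t x) then show ?case using lspan.lspan_gen[of "s * t" x X] Smul assms by (simp add: mult.assoc)
next
  case (lspan_add a b) then show ?case by (simp add: distrib_left lspan.lspan_add)
qed

lemma lspan_lideal: assumes "X \<subseteq> S" shows "lideal (lspan X)"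
  unfolding lideal_def
proof (intro conjI ballI)
  show "lspan X \<subseteq> S" using lspan_S[OF assms] by blast
qed (auto intro: lspan.lspan_0 lspan.lspan_add lspan_lmul[OF assms])

lemma lspan_gl: assumes "X \<subseteq> Collect hom" shows "gl (lspan X)"
proof -
  have XS: "X \<subseteq> S" using assms HS unfolding hom_def by blast
  have "\<forall>n. cmp n a \<in> lspan X" if "a \<in> lspan X" for a
    using that
  proof (induction rule: lspan.induct)
    case lspan_0 then show ?case by (simp add: comp_zero lspan.lspan_0)
  next
    case (lspan_gen s x)
    then obtain k where "x \<in> H k" using assms unfolding hom_def by blast
    then show ?case using comp_multR[OF lspan_gen(1)] comp_S lspan_gen lspan.lspan_gen by simp
  next
    case (lspan_add a b) then show ?case using comp_add lspan_S[OF XS] lspan.lspan_add by simp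
  qed
  thus ?thesis using lspan_lideal[OF XS] unfolding gl_def by blast
qed

lemma lspan_mono: "X \<subseteq> Y \<Longrightarrow> lspan X \<subseteq> lspan Y"
proof
  fix a assume "X \<subseteq> Y" "a \<in> lspan X"
  then show "a \<in> lspan Y" by (induction rule: lspan.induct[OF \<open>a \<in> lspan X\<close>]) (auto intro: lspan.intros)
qed

lemma lspan_gen1: "x \<in> X \<Longrightarrow> x \<in> lspan X"
  using lspan_gen[OF S1] by simp

lemma lspan_rmul_zero: assumes "\<And>g. g \<in> X \<Longrightarrow> g * z = 0" "u \<in> lspan X" shows "u * z = 0"
  using assms(2) by (induction rule: lspan.induct) (auto simp: assms(1) mult.assoc distrib_right)

definition prod :: "'a set \<Rightarrow> 'a set \<Rightarrow> 'a set" where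
  "prod A B = lspan {a * b | a b. a \<in> A \<and> b \<in> B \<and> hom a \<and> hom b}"

lemma prod_gl: "gl (prod A B)"
  unfolding prod_def by (rule lspan_gl) (unfold hom_def, use Hmul in blast)

lemma prod_mem: assumes "gl A" "gl B" "a \<in> A" "b \<in> B" shows "a * b \<in> prod A B"
proof -
  have aS: "a \<in> S" and bS: "b \<in> S" using assms gl_lideal lideal_S by blast+
  have lP: "lideal (prod A B)" using prod_gl gl_lideal by blast
  let ?Ua = "{n. cmp n a \<noteq> 0}" and ?Ub = "{n. cmp n b \<noteq> 0}"
  have "a * b = (\<Sum>m\<in>?Ua. cmp m a) * (\<Sum>n\<in>?Ub. cmp n b)"
    using comp_sum[OF aS comp_fin[OF aS]] comp_sum[OF bS comp_fin[OF bS]] by simp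
  also have "\<dots> = (\<Sum>m\<in>?Ua. \<Sum>n\<in>?Ub. cmp m a * cmp n b)"
    by (subst sum_distrib_right) (simp add: sum_distrib_left)
  also have "\<dots> \<in> prod A B"
  proof (rule lideal_sum[OF lP comp_fin[OF aS]], rule ballI)
    fix m assume "m \<in> ?Ua"
    show "(\<Sum>n\<in>?Ub. cmp m a * cmp n b) \<in> prod A B"
    proof (rule lideal_sum[OF lP comp_fin[OF bS]], rule ballI)
      fix n assume "n \<in> ?Ub"
      have "cmp m a * cmp n b \<in> {a * b | a b. a \<in> A \<and> b \<in> B \<and> hom a \<and> hom b}"
        using gl_comp assms comp_H aS bS unfolding hom_def by blast
      thus "cmp m a * cmp n b \<in> prod A B" unfolding prod_def by (rule lspan_gen1)
    qed
  qed
  finally show ?thesis .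
qed

lemma prod_sub: "lideal B \<Longrightarrow> A \<subseteq> S \<Longrightarrow> prod A B \<subseteq> B"
  unfolding prod_def by (rule lspan_least) (auto intro: lideal_mul)

lemma prod_mono: "A \<subseteq> A' \<Longrightarrow> B \<subseteq> B' \<Longrightarrow> prod A B \<subseteq> prod A' B'"
  unfolding prod_def by (rule lspan_mono) blast

lemma prod_assoc: assumes "gl A" "gl B" "gl C" shows "prod A (prod B C) \<subseteq> prod (prod A B) C"
proof -
  let ?T = "prod (prod A B) C"
  have lT: "lideal ?T" using prod_gl gl_lideal by blast
  have key: "a * u \<in> ?T" if "a \<in> A" "u \<in> prod B C" for a u
  proof -
    have "u \<in> lspan {b * c | b c. b \<in> B \<and> c \<in> C \<and> hom b \<and> hom c}" using that(2) unfolding prod_def .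
    then show ?thesis
    proof (induction rule: lspan.induct)
      case lspan_0 then show ?case using lideal_0[OF lT] by simp
    next
      case (lspan_gen s g)
      then obtain b c where g: "g = b * c" "b \<in> B" "c \<in> C" by blast
      have "s * b \<in> B" using lideal_mul[OF gl_lideal[OF assms(2)] lspan_gen(1) g(2)] .
      hence "a * (s * b) \<in> prod A B" using prod_mem[OF assms(1,2) that(1)] by blast
      hence "(a * (s * b)) * c \<in> ?T" using prod_mem[OF prod_gl assms(3) _ g(3)] by blast
      thus ?case using g by (simp add: mult.assoc)
    next
      case (lspan_add x y) then show ?case using lideal_add[OF lT] by (simp add: distrib_left)
    qed
  qed
  show ?thesis unfolding prod_def[of A "prod B C"]
    by (rule lspan_least[OF lT]) (use key in blast)
qed

lemma prod_zero: "prod {0} B \<subseteq> {0}"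
proof -
  have "lideal {0}" unfolding lideal_def using S0 by auto
  thus ?thesis unfolding prod_def by (rule lspan_least) auto
qed

end


context grs begin

definition maxgl :: "'a set \<Rightarrow> bool" where
  "maxgl M \<longleftrightarrow> gl M \<and> 1 \<notin> M \<and> (\<forall>M'. gl M' \<and> M \<subseteq> M' \<and> 1 \<notin> M' \<longrightarrow> M' = M)"

lemma maxgl_gl: "maxgl M \<Longrightarrow> gl M" unfolding maxgl_def by blast
lemma maxgl_1: "maxgl M \<Longrightarrow> 1 \<notin> M" unfolding maxgl_def by blast
lemma maxgl_grow: "maxgl M \<Longrightarrow> gl M' \<Longrightarrow> M \<subseteq> M' \<Longrightarrow> M' \<noteq> M \<Longrightarrow> 1 \<in> M'"
  unfolding maxgl_def by blast

lemma zorn_max: assumes "gl I" "1 \<notin> I" shows "\<exists>M. maxgl M \<and> I \<subseteq> M"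
proof -
  let ?A = "{M. gl M \<and> I \<subseteq> M \<and> 1 \<notin> M}"
  have "\<forall>C\<in>chains ?A. \<exists>U\<in>?A. \<forall>X\<in>C. X \<subseteq> U"
  proof
    fix C assume C: "C \<in> chains ?A"
    show "\<exists>U\<in>?A. \<forall>X\<in>C. X \<subseteq> U"
    proof (cases "C = {}")
      case True then show ?thesis using assms by blast
    next
      case False
      have ch: "\<And>X Y. X \<in> C \<Longrightarrow> Y \<in> C \<Longrightarrow> X \<subseteq> Y \<or> Y \<subseteq> X"
        using C unfolding chains_def chain_subset_def by blast
      have g: "\<And>X. X \<in> C \<Longrightarrow> gl X" using C unfolding chains_def by blast
      have "gl (\<Union>C)" by (rule gl_chain_Union[OF False ch g])
      moreover have "I \<subseteq> \<Union>C" "1 \<notin> \<Union>C" using C False unfolding chains_def by blast+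
      ultimately show ?thesis by blast
    qed
  qed
  then obtain M where M: "M \<in> ?A" "\<forall>X\<in>?A. M \<subseteq> X \<longrightarrow> X = M" using Zorn_Lemma2[of ?A] by blast
  hence "maxgl M" unfolding maxgl_def using subset_trans by blast
  thus ?thesis using M by blast
qed

definition artgl :: bool where
  "artgl \<longleftrightarrow> (\<forall>f. (\<forall>k. gl (f k)) \<and> (\<forall>k. f (Suc k) \<subseteq> f k) \<longrightarrow> (\<exists>N. \<forall>k\<ge>N. f k = f N))"

lemma art_gl: "graded_artinian G S \<Longrightarrow> artgl"
  unfolding graded_artinian_def artgl_def gl_eq by blast

lemma artglD: "artgl \<Longrightarrow> (\<And>k. gl (f k)) \<Longrightarrow> (\<And>k. f (Suc k) \<subseteq> f k) \<Longrightarrow> \<exists>N. \<forall>k\<ge>N. f k = f N"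
  unfolding artgl_def by blast

lemma min_exists:
  assumes art: artgl and ne: "\<F> \<noteq> {}" and g: "\<forall>X\<in>\<F>. gl X"
  shows "\<exists>X\<in>\<F>. \<forall>Y\<in>\<F>. Y \<subseteq> X \<longrightarrow> Y = X"
proof (rule ccontr)
  assume "\<not> ?thesis"
  hence "\<forall>X\<in>\<F>. \<exists>Y. Y \<in> \<F> \<and> Y \<subseteq> X \<and> Y \<noteq> X" by blast
  then obtain f where f: "\<And>X. X \<in> \<F> \<Longrightarrow> f X \<in> \<F> \<and> f X \<subseteq> X \<and> f X \<noteq> X" by metis
  obtain X0 where X0: "X0 \<in> \<F>" using ne by blast
  define c where "c k = (f ^^ k) X0" for k
  have cF: "c k \<in> \<F>" for k by (induction k) (auto simp: c_def X0 f)
  have cS: "c (Suc k) = f (c k)" for k by (simp add: c_def)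
  have h1: "\<forall>k. gl (c k)" using cF g by blast
  have h2: "\<forall>k. c (Suc k) \<subseteq> c k" using cF f cS by metis
  have "\<exists>N. \<forall>k\<ge>N. c k = c N" by (rule artglD[OF art]) (use h1 h2 in simp_all)
  then obtain N where "\<forall>k\<ge>N. c k = c N" ..
  hence "c (Suc N) = c N" by (erule_tac x="Suc N" in allE) simp
  thus False using f[OF cF[of N]] cS by simp
qed

definition Jprops :: "'a set \<Rightarrow> 'a set set \<Rightarrow> ('a set \<Rightarrow> 'a) \<Rightarrow> bool" where
  "Jprops J \<M> ef \<longleftrightarrow> gl J \<and> finite \<M> \<and> (\<forall>M\<in>\<M>. maxgl M) \<and> J = S \<inter> \<Inter>\<M> \<and>
     (\<forall>M. maxgl M \<longrightarrow> J \<subseteq> M) \<and>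
     (\<forall>M\<in>\<M>. ef M \<in> H 0 \<and> 1 - ef M \<in> M \<and> (\<forall>M'\<in>\<M>. M' \<noteq> M \<longrightarrow> ef M \<in> M'))"

lemma J_exists: assumes art: artgl shows "\<exists>J \<M> ef. Jprops J \<M> ef"
proof -
  let ?fam = "{S \<inter> \<Inter>\<M> | \<M>. finite \<M> \<and> (\<forall>M\<in>\<M>. maxgl M)}"
  have "S \<in> ?fam" by (rule CollectI, rule exI[of _ "{}"]) simp
  hence ne: "?fam \<noteq> {}" by blast
  have g: "\<forall>X\<in>?fam. gl X" using gl_Inter maxgl_gl by blast
  obtain J0 where J0: "J0 \<in> ?fam" "\<forall>Y\<in>?fam. Y \<subseteq> J0 \<longrightarrow> Y = J0"
    using min_exists[OF art ne g] by blast
  then obtain \<M>0 where M0: "finite \<M>0" "\<forall>M\<in>\<M>0. maxgl M" "J0 = S \<inter> \<Inter>\<M>0" by blast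
  have Jmax: "J0 \<subseteq> M" if "maxgl M" for M
  proof -
    have "S \<inter> \<Inter>(insert M \<M>0) \<in> ?fam" using M0 that by blast
    moreover have "S \<inter> \<Inter>(insert M \<M>0) \<subseteq> J0" using M0 by auto
    ultimately have "S \<inter> \<Inter>(insert M \<M>0) = J0" using J0 by blast
    thus ?thesis by auto
  qed
  let ?P = "\<lambda>\<M>. finite \<M> \<and> (\<forall>M\<in>\<M>. maxgl M) \<and> J0 = S \<inter> \<Inter>\<M>"
  obtain \<M> where M: "?P \<M>" "\<forall>\<M>'. ?P \<M>' \<longrightarrow> card \<M> \<le> card \<M>'"
    using ex_has_least_nat[of ?P \<M>0 card] M0 by blast
  have irr: "\<not> (S \<inter> \<Inter>(\<M> - {M}) \<subseteq> M)" if "M \<in> \<M>" for M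
  proof
    assume a: "S \<inter> \<Inter>(\<M> - {M}) \<subseteq> M"
    have "S \<inter> \<Inter>(\<M> - {M}) = S \<inter> \<Inter>\<M>" using a that by blast
    hence "?P (\<M> - {M})" using M by auto
    hence "card \<M> \<le> card (\<M> - {M})" using M by blast
    moreover have "card (\<M> - {M}) < card \<M>" using M that by (meson card_Diff1_less)
    ultimately show False by simp
  qed
  have e: "\<exists>e. e \<in> H 0 \<and> 1 - e \<in> M \<and> (\<forall>M'\<in>\<M>. M' \<noteq> M \<longrightarrow> e \<in> M')" if "M \<in> \<M>" for M
  proof -
    let ?Q = "S \<inter> \<Inter>(\<M> - {M})"
    have mM: "maxgl M" using M that by blast
    have gQ: "gl ?Q" by (rule gl_Inter) (use M maxgl_gl in blast)
    have gM: "gl M" using mM maxgl_gl by blast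
    have g2: "gl (setsum M ?Q)" by (rule gl_setsum[OF gM gQ])
    have s1: "M \<subseteq> setsum M ?Q" by (rule setsum_left[OF gl_lideal[OF gQ]])
    have s2: "?Q \<subseteq> setsum M ?Q" by (rule setsum_right[OF gl_lideal[OF gM]])
    have "setsum M ?Q \<noteq> M" using s2 irr[OF that] by blast
    hence "1 \<in> setsum M ?Q" using maxgl_grow[OF mM g2 s1] by blast
    then obtain m q where mq: "1 = m + q" "m \<in> M" "q \<in> ?Q" unfolding setsum_def by blast
    have mS: "m \<in> S" using mq(2) gl_lideal[OF gM] lideal_S by blast
    have qS: "q \<in> S" using mq(3) by blast
    have "1 = cmp 0 m + cmp 0 q" using comp_add[OF mS qS, of 0] mq(1) comp_one by simp
    hence "1 - cmp 0 q = cmp 0 m" by (simp add: algebra_simps)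
    moreover have "cmp 0 m \<in> M" using gl_comp[OF gM mq(2)] .
    moreover have "cmp 0 q \<in> ?Q" using gl_comp[OF gQ mq(3)] .
    moreover have "cmp 0 q \<in> H 0" using comp_H[OF qS] .
    ultimately show ?thesis by auto
  qed
  then obtain ef where ef: "\<forall>M\<in>\<M>. ef M \<in> H 0 \<and> 1 - ef M \<in> M \<and> (\<forall>M'\<in>\<M>. M' \<noteq> M \<longrightarrow> ef M \<in> M')"
    by metis
  have "gl J0" using J0 g by blast
  hence "Jprops J0 \<M> ef" unfolding Jprops_def using M Jmax ef by blast
  thus ?thesis by blast
qed

lemma Jp_gl: "Jprops J \<M> ef \<Longrightarrow> gl J" unfolding Jprops_def by (elim conjE) meson
lemma Jp_fin: "Jprops J \<M> ef \<Longrightarrow> finite \<M>" unfolding Jprops_def by (elim conjE) meson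
lemma Jp_max: "Jprops J \<M> ef \<Longrightarrow> M \<in> \<M> \<Longrightarrow> maxgl M" unfolding Jprops_def by (elim conjE) meson
lemma Jp_eq: "Jprops J \<M> ef \<Longrightarrow> J = S \<inter> \<Inter>\<M>" unfolding Jprops_def by (elim conjE) meson
lemma Jp_sub: "Jprops J \<M> ef \<Longrightarrow> maxgl M \<Longrightarrow> J \<subseteq> M" unfolding Jprops_def by (elim conjE) meson
lemma Jp_H: "Jprops J \<M> ef \<Longrightarrow> M \<in> \<M> \<Longrightarrow> ef M \<in> H 0" unfolding Jprops_def by (elim conjE) meson
lemma Jp_1: "Jprops J \<M> ef \<Longrightarrow> M \<in> \<M> \<Longrightarrow> 1 - ef M \<in> M" unfolding Jprops_def by (elim conjE) meson
lemma Jp_o: "Jprops J \<M> ef \<Longrightarrow> M \<in> \<M> \<Longrightarrow> M' \<in> \<M> \<Longrightarrow> M' \<noteq> M \<Longrightarrow> ef M \<in> M'"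
  unfolding Jprops_def by (elim conjE) meson

lemma J_unit: assumes "Jprops J \<M> ef" "j \<in> J" "j \<in> H 0" "x \<in> S" "(1 - j) * x = 0" shows "x = 0"
proof -
  have u: "1 - j \<in> H 0" using Hdiff[OF H1 assms(3)] .
  have gl1: "gl (lmul S (1 - j))" by (rule gl_lmul[OF gl_S u])
  show ?thesis
  proof (cases "1 \<in> lmul S (1 - j)")
    case True
    then obtain v where "1 = v * (1 - j)" unfolding lmul_def by blast
    hence "x = v * ((1 - j) * x)" by (simp add: mult.assoc[symmetric])
    thus ?thesis using assms(5) by simp
  next
    case False
    then obtain M where M: "maxgl M" "lmul S (1 - j) \<subseteq> M" using zorn_max[OF gl1] by blast
    have "1 - j \<in> M" using M(2) S1 unfolding lmul_def by force
    moreover have "j \<in> M" using Jp_sub[OF assms(1) M(1)] assms(2) by blast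
    ultimately have "1 - j + j \<in> M" using lideal_add maxgl_gl gl_lideal M(1) by blast
    thus ?thesis using maxgl_1[OF M(1)] by simp
  qed
qed

lemma J_u: assumes "Jprops J \<M> ef" shows "1 - (\<Sum>M\<in>\<M>. ef M) \<in> J"
proof -
  have fin: "finite \<M>" using Jp_fin[OF assms] .
  have JE: "J = S \<inter> \<Inter>\<M>" using Jp_eq[OF assms] .
  have efS: "\<forall>M\<in>\<M>. ef M \<in> S" using Jp_H[OF assms] HS by blast
  have "1 - (\<Sum>M\<in>\<M>. ef M) \<in> S" using Sdiff[OF S1 Ssum[OF fin efS]] .
  moreover have "1 - (\<Sum>M\<in>\<M>. ef M) \<in> M" if "M \<in> \<M>" for M
  proof -
    have lM: "lideal M" using Jp_max[OF assms that] maxgl_gl gl_lideal by blast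
    have "(\<Sum>M\<in>\<M>. ef M) = ef M + (\<Sum>M'\<in>\<M> - {M}. ef M')" using sum.remove[OF fin that] .
    hence "1 - (\<Sum>M\<in>\<M>. ef M) = (1 - ef M) - (\<Sum>M'\<in>\<M> - {M}. ef M')" by (simp add: algebra_simps)
    moreover have "1 - ef M \<in> M" using Jp_1[OF assms that] .
    moreover have "(\<Sum>M'\<in>\<M> - {M}. ef M') \<in> M"
      by (rule lideal_sum[OF lM]) (use fin Jp_o[OF assms _ that] in auto)
    ultimately show ?thesis using lideal_diff[OF lM] by metis
  qed
  ultimately show ?thesis using JE by blast
qed

lemma J_mulef: assumes "Jprops J \<M> ef" "M \<in> \<M>" "r \<in> M" shows "r * ef M \<in> J"
proof -
  have JE: "J = S \<inter> \<Inter>\<M>" using Jp_eq[OF assms(1)] .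
  have lM: "\<And>M. M \<in> \<M> \<Longrightarrow> lideal M" using Jp_max[OF assms(1)] maxgl_gl gl_lideal by blast
  have rS: "r \<in> S" using lM[OF assms(2)] assms(3) lideal_S by blast
  have eS: "ef M \<in> S" using Jp_H[OF assms(1,2)] HS by blast
  have "r * ef M \<in> M'" if "M' \<in> \<M>" for M'
  proof (cases "M' = M")
    case True
    have "1 - ef M \<in> M" using Jp_1[OF assms(1,2)] .
    hence "r * (1 - ef M) \<in> M" using lideal_mul[OF lM[OF assms(2)] rS] by blast
    hence "r - r * (1 - ef M) \<in> M" using lideal_diff[OF lM[OF assms(2)] assms(3)] by blast
    thus ?thesis using True by (simp add: algebra_simps)
  next
    case False
    hence "ef M \<in> M'" using Jp_o[OF assms(1,2) that] by blast
    thus ?thesis using lideal_mul[OF lM[OF that] rS] by blast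
  qed
  thus ?thesis using JE Smul[OF rS eS] by blast
qed

primrec pw :: "'a set \<Rightarrow> nat \<Rightarrow> 'a set" where
  "pw J 0 = J"
| "pw J (Suc k) = prod J (pw J k)"

lemma pw_gl: "gl J \<Longrightarrow> gl (pw J k)"
  by (induction k) (auto intro: prod_gl)

lemma pw_dec: "gl J \<Longrightarrow> pw J (Suc k) \<subseteq> pw J k"
  using prod_sub[OF gl_lideal[OF pw_gl]] gl_lideal lideal_def by (metis pw.simps(2))

lemma pw_J: "gl J \<Longrightarrow> pw J k \<subseteq> J"
proof (induction k)
  case 0 then show ?case by simp
next
  case (Suc k) then show ?case using pw_dec by blast
qed

lemma pw_add: "gl J \<Longrightarrow> pw J (Suc (a + b)) \<subseteq> prod (pw J a) (pw J b)"
proof (induction a)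
  case 0 then show ?case by simp
next
  case (Suc a)
  have "pw J (Suc (Suc a + b)) = prod J (pw J (Suc (a + b)))" by simp
  also have "\<dots> \<subseteq> prod J (prod (pw J a) (pw J b))" using prod_mono Suc by blast
  also have "\<dots> \<subseteq> prod (prod J (pw J a)) (pw J b)" using prod_assoc Suc pw_gl by blast
  finally show ?case by simp
qed

lemma nil: assumes art: artgl and gJ: "gl J"
  and inv: "\<And>j x. j \<in> J \<Longrightarrow> j \<in> H 0 \<Longrightarrow> x \<in> S \<Longrightarrow> (1 - j) * x = 0 \<Longrightarrow> x = 0"
  shows "\<exists>n. pw J n \<subseteq> {0}"
proof -
  obtain n where n: "\<forall>k\<ge>n. pw J k = pw J n"
    using artglD[where f="pw J", OF art pw_gl[OF gJ] pw_dec[OF gJ]] by blast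
  let ?N = "pw J n"
  have gN: "gl ?N" using pw_gl[OF gJ] .
  have e: "pw J (Suc (n + n)) = ?N" using n[rule_format, of "Suc (n + n)"] by simp
  have NN: "?N \<subseteq> prod ?N ?N" using pw_add[OF gJ, of n n] unfolding e .
  have NJ: "?N \<subseteq> J" using pw_J[OF gJ] .
  have "?N \<subseteq> {0}"
  proof (rule ccontr)
    assume "\<not> ?N \<subseteq> {0}"
    then obtain n0 where n0: "n0 \<in> ?N" "n0 \<noteq> 0" by blast
    let ?F = "{K. gl K \<and> \<not> prod ?N K \<subseteq> {0}}"
    have "n0 * 1 \<in> prod ?N S" using prod_mem[OF gN gl_S n0(1) S1] .
    hence "S \<in> ?F" using gl_S n0 by auto
    then obtain K where K: "K \<in> ?F" "\<forall>Y\<in>?F. Y \<subseteq> K \<longrightarrow> Y = K"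
      using min_exists[OF art, of ?F] by blast
    have gK: "gl K" and lK: "lideal K" using K gl_lideal by auto
    obtain u where u: "u \<in> prod ?N K" "u \<noteq> 0" using K by blast
    have "\<exists>a b. a \<in> ?N \<and> b \<in> K \<and> hom a \<and> hom b \<and> a * b \<noteq> 0"
    proof (rule ccontr)
      assume "\<not> ?thesis"
      hence "\<And>g. g \<in> {a * b | a b. a \<in> ?N \<and> b \<in> K \<and> hom a \<and> hom b} \<Longrightarrow> g * 1 = 0" by auto
      hence "u * 1 = 0" using u(1) unfolding prod_def by (rule lspan_rmul_zero)
      thus False using u(2) by simp
    qed
    then obtain a x where ax: "a \<in> ?N" "x \<in> K" "hom x" "a * x \<noteq> 0" by blast
    then obtain k where xk: "x \<in> H k" unfolding hom_def by blast
    have xS: "x \<in> S" using xk HS by blast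
    have gSx: "gl (lmul S x)" by (rule gl_lmul[OF gl_S xk])
    have "lmul S x \<subseteq> K" using lmul_sub[OF lK _ ax(2)] by blast
    moreover have "x \<in> lmul S x" unfolding lmul_def using S1 mult_1_left[of x, symmetric] by blast
    hence "a * x \<in> prod ?N (lmul S x)" by (rule prod_mem[OF gN gSx ax(1)])
    ultimately have SxK: "lmul S x = K" using K ax(4) gSx by auto
    have gNx: "gl (lmul ?N x)" by (rule gl_lmul[OF gN xk])
    have NxK: "lmul ?N x \<subseteq> K" using SxK gN gl_lideal lideal_S unfolding lmul_def by blast
    have "a \<in> prod ?N ?N" using NN ax(1) by blast
    have "\<exists>p q. p \<in> ?N \<and> q \<in> ?N \<and> p * q * x \<noteq> 0"
    proof (rule ccontr)
      assume "\<not> ?thesis"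
      hence "\<And>g. g \<in> {a * b | a b. a \<in> ?N \<and> b \<in> ?N \<and> hom a \<and> hom b} \<Longrightarrow> g * x = 0" by auto
      hence "a * x = 0" using \<open>a \<in> prod ?N ?N\<close> unfolding prod_def by (rule lspan_rmul_zero)
      thus False using ax(4) by simp
    qed
    then obtain p q where pq: "p \<in> ?N" "q \<in> ?N" "p * q * x \<noteq> 0" by blast
    have "q * x \<in> lmul ?N x" unfolding lmul_def using pq(2) by blast
    hence "p * (q * x) \<in> prod ?N (lmul ?N x)" by (rule prod_mem[OF gN gNx pq(1)])
    hence "lmul ?N x \<in> ?F" using gNx pq(3) by (auto simp: mult.assoc)
    hence "lmul ?N x = K" using K NxK by blast
    hence "x \<in> lmul ?N x" using ax(2) by simp
    then obtain m where m: "m \<in> ?N" "x = m * x" unfolding lmul_def by blast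
    have mS: "m \<in> S" using m gN gl_lideal lideal_S by blast
    have "x = cmp k x" using comp_hom[OF xk] by simp
    also have "\<dots> = cmp k (m * x)" using m(2) by simp
    also have "\<dots> = cmp 0 m * x" using comp_multR[OF mS xk] by simp
    finally have x0: "x = cmp 0 m * x" .
    have j: "cmp 0 m \<in> J" "cmp 0 m \<in> H 0" using gl_comp[OF gN m(1)] NJ comp_H[OF mS] by auto
    have "(1 - cmp 0 m) * x = 0" using x0 by (simp add: algebra_simps)
    hence "x = 0" using inv[OF j xS] by blast
    thus False using ax(4) by simp
  qed
  thus ?thesis by blast
qed

lemma JL_zero: assumes gJ: "gl J" and gL: "gl L" and JL: "prod J L = L" and n: "pw J n \<subseteq> {0}"
  shows "L \<subseteq> {0}"
proof -
  have "L \<subseteq> prod (pw J k) L" for k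
  proof (induction k)
    case 0 then show ?case using JL by simp
  next
    case (Suc k)
    have "L = prod J L" using JL by simp
    also have "\<dots> \<subseteq> prod J (prod (pw J k) L)" using prod_mono Suc by blast
    also have "\<dots> \<subseteq> prod (prod J (pw J k)) L" using prod_assoc[OF gJ pw_gl[OF gJ] gL] .
    finally show ?case by simp
  qed
  hence "L \<subseteq> prod (pw J n) L" .
  also have "\<dots> \<subseteq> prod {0} L" using prod_mono n by blast
  also have "\<dots> \<subseteq> {0}" using prod_zero .
  finally show ?thesis .
qed

end


context grs begin

definition Noeth :: "'a set \<Rightarrow> 'a set \<Rightarrow> bool" where
  "Noeth B L \<longleftrightarrow> (\<forall>f. (\<forall>k. gl (f k) \<and> B \<subseteq> f k \<and> f k \<subseteq> L) \<and> (\<forall>k. f k \<subseteq> f (Suc k)) \<longrightarrow> (\<exists>N. \<forall>k\<ge>N. f k = f N))"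

lemma NoethD: "Noeth B L \<Longrightarrow> (\<And>k. gl (f k)) \<Longrightarrow> (\<And>k. B \<subseteq> f k) \<Longrightarrow> (\<And>k. f k \<subseteq> L) \<Longrightarrow> (\<And>k. f k \<subseteq> f (Suc k))
  \<Longrightarrow> \<exists>N. \<forall>k\<ge>N. f k = f N"
  unfolding Noeth_def by blast

lemma Noeth_compose:
  assumes gC: "gl C" and gL: "gl L" and BC: "B \<subseteq> C" and CL: "C \<subseteq> L"
    and N1: "Noeth B C" and N2: "Noeth C L"
  shows "Noeth B L"
  unfolding Noeth_def
proof (intro allI impI, elim conjE)
  fix f :: "nat \<Rightarrow> 'a set" assume f1: "\<forall>k. gl (f k) \<and> B \<subseteq> f k \<and> f k \<subseteq> L" and f2: "\<forall>k. f k \<subseteq> f (Suc k)"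
  have gf: "\<And>k. gl (f k)" and lf: "\<And>k. lideal (f k)" using f1 gl_lideal by auto
  have mono: "\<And>i j. i \<le> j \<Longrightarrow> f i \<subseteq> f j" using f2 lift_Suc_mono_le[of f] by blast
  obtain N1 where n1: "\<forall>k\<ge>N1. f k \<inter> C = f N1 \<inter> C"
    using NoethD[where f="\<lambda>k. f k \<inter> C", OF N1] gf gC gl_Int f1 BC f2 by blast
  obtain N2 where n2: "\<forall>k\<ge>N2. setsum (f k) C = setsum (f N2) C"
  proof -
    have "\<exists>N. \<forall>k\<ge>N. setsum (f k) C = setsum (f N) C"
    proof (rule NoethD[where f="\<lambda>k. setsum (f k) C", OF N2])
      show "\<And>k. gl (setsum (f k) C)" using gl_setsum[OF gf gC] .
      show "\<And>k. C \<subseteq> setsum (f k) C" using setsum_right[OF lf] .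
      show "\<And>k. setsum (f k) C \<subseteq> L" using setsum_sub[OF gl_lideal[OF gL]] f1 CL by blast
      show "\<And>k. setsum (f k) C \<subseteq> setsum (f (Suc k)) C" using setsum_mono f2 by blast
    qed
    thus ?thesis using that by blast
  qed
  let ?N = "max N1 N2"
  have "f k = f ?N" if "k \<ge> ?N" for k
  proof
    show "f ?N \<subseteq> f k" using mono that by blast
    show "f k \<subseteq> f ?N"
    proof
      fix x assume xk: "x \<in> f k"
      have "x + 0 \<in> setsum (f k) C" using xk lideal_0[OF gl_lideal[OF gC]] unfolding setsum_def by blast
      moreover have "setsum (f k) C = setsum (f ?N) C" using n2 that by (metis max.boundedE max.cobounded2)
      ultimately obtain y c where yc: "x = y + c" "y \<in> f ?N" "c \<in> C" unfolding setsum_def by auto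
      have "y \<in> f k" using yc(2) mono that by blast
      hence "c \<in> f k" using lideal_diff[OF lf xk] yc(1) by (metis add_diff_cancel_left')
      hence "c \<in> f k \<inter> C" using yc by blast
      moreover have "f k \<inter> C = f ?N \<inter> C" using n1 that by (metis max.boundedE max.cobounded1)
      ultimately have "c \<in> f ?N" by blast
      thus "x \<in> f ?N" using yc lideal_add[OF lf] by blast
    qed
  qed
  thus "\<exists>N. \<forall>k\<ge>N. f k = f N" by blast
qed

lemma Noeth_zero: assumes "L \<subseteq> {0}" shows "Noeth B L"
  unfolding Noeth_def
proof (intro allI impI, elim conjE)
  fix f :: "nat \<Rightarrow> 'a set" assume f1: "\<forall>k. gl (f k) \<and> B \<subseteq> f k \<and> f k \<subseteq> L"
  have "f k = {0}" for k using f1 assms gl_lideal lideal_0 by blast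
  thus "\<exists>N. \<forall>k\<ge>N. f k = f N" by simp
qed

lemma strict_chain: assumes "\<not> Noeth B L"
  shows "\<exists>f. (\<forall>k. gl (f k) \<and> B \<subseteq> f k \<and> f k \<subseteq> L) \<and> (\<forall>k. f k \<subset> f (Suc k))"
proof -
  obtain f where f1: "\<forall>k. gl (f k) \<and> B \<subseteq> f k \<and> f k \<subseteq> L" and f2: "\<forall>k. f k \<subseteq> f (Suc k)"
    and ns: "\<not> (\<exists>N. \<forall>k\<ge>N. f k = f N)" using assms unfolding Noeth_def by blast
  have mono: "\<And>i j. i \<le> j \<Longrightarrow> f i \<subseteq> f j" using f2 lift_Suc_mono_le[of f] by blast
  have ex: "\<exists>k. k \<ge> N \<and> f k \<noteq> f N" for N using ns by blast
  define nxt where "nxt N = (SOME k. k \<ge> N \<and> f k \<noteq> f N)" for N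
  have nxt: "nxt N \<ge> N \<and> f (nxt N) \<noteq> f N" for N
    unfolding nxt_def by (rule someI_ex[OF ex])
  define \<sigma> where "\<sigma> n = (nxt ^^ n) 0" for n
  have sS: "\<sigma> (Suc n) = nxt (\<sigma> n)" for n by (simp add: \<sigma>_def)
  have "f (\<sigma> n) \<subset> f (\<sigma> (Suc n))" for n
    using nxt[of "\<sigma> n"] mono[of "\<sigma> n" "nxt (\<sigma> n)"] sS by auto
  thus ?thesis using f1 by (intro exI[of _ "\<lambda>n. f (\<sigma> n)"]) blast
qed

lemma semis: assumes art: artgl and Jp: "Jprops J \<M> ef" and gL: "gl L"
  shows "Noeth (prod J L) L"
proof (rule ccontr)
  let ?B = "prod J L"
  assume nN: "\<not> Noeth ?B L"
  have gJ: "gl J" using Jp_gl[OF Jp] .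
  have JS: "J \<subseteq> S" using gJ gl_lideal lideal_S by blast
  have lL: "lideal L" using gL gl_lideal by blast
  have gB: "gl ?B" using prod_gl .
  have lB: "lideal ?B" using gB gl_lideal by blast
  have BL: "?B \<subseteq> L" using prod_sub[OF lL JS] .
  have jy: "\<And>j y. j \<in> J \<Longrightarrow> y \<in> L \<Longrightarrow> j * y \<in> ?B" using prod_mem[OF gJ gL] by blast
  have fin: "finite \<M>" using Jp_fin[OF Jp] .
  have atom: "\<exists>A. gl A \<and> ?B \<subseteq> A \<and> A \<subseteq> K' \<and> \<not> A \<subseteq> K \<and> A \<inter> K \<subseteq> ?B"
    if gK: "gl K" and gK': "gl K'" and BK: "?B \<subseteq> K" and KK: "K \<subseteq> K'" and KL: "K' \<subseteq> L"
      and nK: "\<not> K' \<subseteq> K" for K K'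
  proof -
    have lK: "lideal K" and lK': "lideal K'" using gK gK' gl_lideal by auto
    have "\<exists>y k M. y \<in> H k \<and> y \<in> K' \<and> M \<in> \<M> \<and> ef M * y \<notin> K"
    proof (rule ccontr)
      assume no: "\<not> ?thesis"
      have hk: "y \<in> K" if yH: "y \<in> H k" and yK: "y \<in> K'" for y k
      proof -
        have yS: "y \<in> S" using yH HS by blast
        have "y = (1 - (\<Sum>M\<in>\<M>. ef M)) * y + (\<Sum>M\<in>\<M>. ef M * y)"
          by (simp add: sum_distrib_right[symmetric] algebra_simps)
        moreover have "(1 - (\<Sum>M\<in>\<M>. ef M)) * y \<in> K" using jy[OF J_u[OF Jp]] yK KL BK by blast
        moreover have "(\<Sum>M\<in>\<M>. ef M * y) \<in> K" by (rule lideal_sum[OF lK fin]) (use no yH yK in blast)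
        ultimately show ?thesis using lideal_add[OF lK] by metis
      qed
      have "K' \<subseteq> K"
      proof
        fix a assume aK': "a \<in> K'"
        have aS: "a \<in> S" using aK' lK' lideal_S by blast
        show "a \<in> K" by (rule lideal_of_comps[OF lK aS]) (use hk comp_H[OF aS] gl_comp[OF gK' aK'] in blast)
      qed
      thus False using nK by blast
    qed
    then obtain y k M where y: "y \<in> H k" "y \<in> K'" "M \<in> \<M>" "ef M * y \<notin> K" by blast
    let ?z = "ef M * y"
    have eH: "ef M \<in> H 0" using Jp_H[OF Jp y(3)] .
    have eS: "ef M \<in> S" using eH HS by blast
    have zH: "?z \<in> H k" using Hmul[OF eH y(1)] by simp
    have zK': "?z \<in> K'" using lideal_mul[OF lK' eS y(2)] .
    let ?A = "setsum ?B (lmul S ?z)"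
    have gSz: "gl (lmul S ?z)" by (rule gl_lmul[OF gl_S zH])
    have gA: "gl ?A" by (rule gl_setsum[OF gB gSz])
    have BA: "?B \<subseteq> ?A" by (rule setsum_left[OF gl_lideal[OF gSz]])
    have AK': "?A \<subseteq> K'"
      by (rule setsum_sub[OF lK']) (use BK KK lmul_sub[OF lK' _ zK'] in blast)+
    have "?z \<in> lmul S ?z" unfolding lmul_def using S1 mult_1_left[of ?z, symmetric] by blast
    hence "?z \<in> ?A" using setsum_right[OF lB] by blast
    hence nAK: "\<not> ?A \<subseteq> K" using y(4) by blast
    have mM: "maxgl M" using Jp_max[OF Jp y(3)] .
    have colM: "colon K ?z = M"
    proof -
      have "gl (colon K ?z)" by (rule gl_colon[OF gK zH])
      moreover have "M \<subseteq> colon K ?z"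
      proof
        fix r assume rM: "r \<in> M"
        have rS: "r \<in> S" using rM mM maxgl_gl gl_lideal lideal_S by blast
        have "r * ef M \<in> J" using J_mulef[OF Jp y(3) rM] .
        hence "(r * ef M) * y \<in> ?B" using jy y(2) KL by blast
        thus "r \<in> colon K ?z" using rS BK unfolding colon_def by (auto simp: mult.assoc)
      qed
      moreover have "1 \<notin> colon K ?z" using y(4) unfolding colon_def by simp
      ultimately show ?thesis using mM unfolding maxgl_def by blast
    qed
    have "?A \<inter> K \<subseteq> ?B"
    proof
      fix w assume w: "w \<in> ?A \<inter> K"
      then obtain b s where bs: "w = b + s * ?z" "b \<in> ?B" "s \<in> S" unfolding setsum_def lmul_def by blast
      have "s * ?z = w - b" using bs(1) by simp
      moreover have "w - b \<in> K" using w bs(2) BK lideal_diff[OF lK] by blast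
      ultimately have "s \<in> colon K ?z" using bs(3) unfolding colon_def by simp
      hence "s \<in> M" using colM by simp
      hence "(s * ef M) * y \<in> ?B" using jy[OF J_mulef[OF Jp y(3)]] y(2) KL by blast
      hence "s * ?z \<in> ?B" by (simp add: mult.assoc)
      thus "w \<in> ?B" using bs lideal_add[OF lB] by blast
    qed
    thus ?thesis using gA BA AK' nAK by blast
  qed
  obtain K where K1: "\<forall>k. gl (K k) \<and> ?B \<subseteq> K k \<and> K k \<subseteq> L" and K2: "\<forall>k. K k \<subset> K (Suc k)"
    using strict_chain[OF nN] by blast
  have mono: "\<And>i j. i \<le> j \<Longrightarrow> K i \<subseteq> K j" using K2 lift_Suc_mono_le[of K] by blast
  have "\<forall>n. \<exists>A. gl A \<and> ?B \<subseteq> A \<and> A \<subseteq> K (Suc n) \<and> \<not> A \<subseteq> K n \<and> A \<inter> K n \<subseteq> ?B"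
  proof
    fix n show "\<exists>A. gl A \<and> ?B \<subseteq> A \<and> A \<subseteq> K (Suc n) \<and> \<not> A \<subseteq> K n \<and> A \<inter> K n \<subseteq> ?B"
      by (rule atom) (use K1 K2 in blast)+
  qed
  then obtain A where A: "\<And>n. gl (A n)" "\<And>n. ?B \<subseteq> A n" "\<And>n. A n \<subseteq> K (Suc n)"
      "\<And>n. \<not> A n \<subseteq> K n" "\<And>n. A n \<inter> K n \<subseteq> ?B" by metis
  have lA: "\<And>n. lideal (A n)" using A(1) gl_lideal by blast
  define Ss where "Ss n = rec_nat ?B (\<lambda>p X. setsum X (A (n + p)))" for n
  have Ss0: "Ss n 0 = ?B" for n by (simp add: Ss_def)
  have SsS: "Ss n (Suc p) = setsum (Ss n p) (A (n + p))" for n p by (simp add: Ss_def)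
  have gS: "gl (Ss n p)" for n p by (induction p) (simp_all add: Ss0 SsS gB gl_setsum A(1))
  have BS: "?B \<subseteq> Ss n p" for n p
  proof (induction p)
    case 0 then show ?case by (simp add: Ss0)
  next
    case (Suc p) then show ?case using setsum_left[OF lA] SsS by blast
  qed
  have Smono: "Ss n p \<subseteq> Ss n (Suc p)" for n p using setsum_left[OF lA] SsS by blast
  have SK: "Ss n p \<subseteq> K (n + p)" for n p
  proof (induction p)
    case 0 then show ?case using K1 by (simp add: Ss0)
  next
    case (Suc p)
    have lK: "lideal (K (n + Suc p))" using K1 gl_lideal by blast
    have "Ss n p \<subseteq> K (n + Suc p)" using Suc mono[of "n + p" "n + Suc p"] by simp
    moreover have "A (n + p) \<subseteq> K (n + Suc p)" using A(3)[of "n + p"] by simp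
    ultimately show ?case using setsum_sub[OF lK] SsS by simp
  qed
  have Sshift: "Ss (Suc n) p \<subseteq> Ss n (Suc p)" for n p
  proof (induction p)
    case 0 then show ?case using BS by (simp add: Ss0)
  next
    case (Suc p)
    have "Ss (Suc n) (Suc p) = setsum (Ss (Suc n) p) (A (n + Suc p))" using SsS by simp
    also have "\<dots> \<subseteq> setsum (Ss n (Suc p)) (A (n + Suc p))" using setsum_mono Suc by blast
    also have "\<dots> = Ss n (Suc (Suc p))" using SsS by simp
    finally show ?case .
  qed
  have indep: "A n \<inter> Ss (Suc n) p \<subseteq> ?B" for n p
  proof (induction p)
    case 0 then show ?case by (simp add: Ss0)
  next
    case (Suc p)
    show ?case
    proof
      fix y assume y: "y \<in> A n \<inter> Ss (Suc n) (Suc p)"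
      then obtain s t where st: "y = s + t" "s \<in> Ss (Suc n) p" "t \<in> A (Suc n + p)"
        unfolding SsS setsum_def by blast
      have lK: "lideal (K (Suc n + p))" using K1 gl_lideal by blast
      have yK: "y \<in> K (Suc n + p)" using y A(3)[of n] mono[of "Suc n" "Suc n + p"] by auto
      have sK: "s \<in> K (Suc n + p)" using st(2) SK by blast
      have "t = y - s" using st(1) by simp
      hence "t \<in> K (Suc n + p)" using lideal_diff[OF lK yK sK] by simp
      hence tB: "t \<in> ?B" using A(5) st(3) by blast
      have "s = y - t" using st(1) by simp
      hence "s \<in> A n" using lideal_diff[OF lA] y tB A(2) by blast
      hence "s \<in> ?B" using Suc st(2) by blast
      thus "y \<in> ?B" using st(1) tB lideal_add[OF lB] by blast
    qed
  qed
  define T where "T n = \<Union>(range (Ss n))" for n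
  have Smono2: "\<And>n i j. i \<le> j \<Longrightarrow> Ss n i \<subseteq> Ss n j"
    using Smono lift_Suc_mono_le by metis
  have gT: "gl (T n)" for n
    unfolding T_def
  proof (rule gl_chain_Union)
    show "range (Ss n) \<noteq> {}" by simp
    show "\<And>X. X \<in> range (Ss n) \<Longrightarrow> gl X" using gS by blast
    show "\<And>X Y. X \<in> range (Ss n) \<Longrightarrow> Y \<in> range (Ss n) \<Longrightarrow> X \<subseteq> Y \<or> Y \<subseteq> X"
      using Smono2 nat_le_linear by blast
  qed
  have Tdec: "T (Suc n) \<subseteq> T n" for n unfolding T_def using Sshift by blast
  have AT: "A n \<subseteq> T n" for n
  proof -
    have "A n \<subseteq> Ss n (Suc 0)" using setsum_right[OF lB] SsS[of n 0] Ss0 by simp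
    thus ?thesis unfolding T_def by blast
  qed
  have ATS: "A n \<inter> T (Suc n) \<subseteq> ?B" for n unfolding T_def using indep by blast
  have Tne: "T (Suc n) \<noteq> T n" for n
  proof
    assume "T (Suc n) = T n"
    hence "A n \<subseteq> ?B" using AT ATS by blast
    thus False using A(4) K1 by blast
  qed
  have "\<exists>N. \<forall>k\<ge>N. T k = T N" by (rule artglD[OF art]) (use gT Tdec in simp_all)
  then obtain N where "\<forall>k\<ge>N. T k = T N" ..
  hence "T (Suc N) = T N" by (erule_tac x="Suc N" in allE) simp
  thus False using Tne by blast
qed

theorem HL: assumes art: artgl shows "Noeth {} S"
proof (rule ccontr)
  assume nS: "\<not> Noeth {} S"
  let ?F = "{L. gl L \<and> \<not> Noeth {} L}"
  have "S \<in> ?F" using nS gl_S by blast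
  then obtain L where L: "L \<in> ?F" "\<forall>Y\<in>?F. Y \<subseteq> L \<longrightarrow> Y = L"
    using min_exists[OF art, of ?F] by blast
  have gL: "gl L" and nL: "\<not> Noeth {} L" using L by auto
  obtain J \<M> ef where Jp: "Jprops J \<M> ef" using J_exists[OF art] by blast
  have gJ: "gl J" using Jp_gl[OF Jp] .
  have JS: "J \<subseteq> S" using gJ gl_lideal lideal_S by blast
  let ?B = "prod J L"
  have BL: "?B \<subseteq> L" using prod_sub[OF gl_lideal[OF gL] JS] .
  show False
  proof (cases "?B = L")
    case True
    obtain n where "pw J n \<subseteq> {0}" using nil[OF art gJ] J_unit[OF Jp] by blast
    hence "L \<subseteq> {0}" using JL_zero[OF gJ gL True] by blast
    thus False using nL Noeth_zero by blast
  next
    case False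
    have "Noeth {} ?B"
    proof (rule ccontr)
      assume "\<not> Noeth {} ?B"
      hence "?B \<in> ?F" using prod_gl by blast
      thus False using L BL False by blast
    qed
    moreover have "Noeth ?B L" by (rule semis[OF art Jp gL])
    ultimately have "Noeth {} L" using Noeth_compose[OF prod_gl gL _ BL] by blast
    thus False using nL by blast
  qed
qed

theorem acc: assumes "graded_artinian G S"
  shows "\<forall>f. (\<forall>k. gl (f k)) \<and> (\<forall>k. f k \<subseteq> f (Suc k)) \<longrightarrow> (\<exists>N. \<forall>k\<ge>N. f k = f N)"
proof (intro allI impI, elim conjE)
  fix f :: "nat \<Rightarrow> 'a set" assume h1: "\<forall>k. gl (f k)" and h2: "\<forall>k. f k \<subseteq> f (Suc k)"
  have h3: "\<And>k. f k \<subseteq> S" using h1 gl_lideal lideal_S by blast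
  show "\<exists>N. \<forall>k\<ge>N. f k = f N"
    by (rule NoethD[OF HL[OF art_gl[OF assms]]]) (use h1 h2 h3 in auto)
qed

end


lemma sum_closed_gen: assumes "0 \<in> X" "\<And>x y. x \<in> X \<Longrightarrow> y \<in> X \<Longrightarrow> x + y \<in> X"
  shows "finite A \<Longrightarrow> (\<forall>i\<in>A. f i \<in> X) \<Longrightarrow> sum f A \<in> X"
  by (induction A rule: finite_induct) (use assms in auto)

locale dgctx =
  fixes phi :: "'r::comm_ring_1 \<Rightarrow> 'a::ring_1" and G :: "int \<Rightarrow> 'a set" and d :: "'a \<Rightarrow> 'a"
  assumes dg: "dg_algebra phi G d"
begin

lemma grG: "graded_ring G" using dg unfolding dg_algebra_def graded_algebra_def by blast
lemma dadd: "d (a + b) = d a + d b" using dg unfolding dg_algebra_def by blast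
lemma dG: "x \<in> G n \<Longrightarrow> d x \<in> G (n + 1)" using dg unfolding dg_algebra_def by blast
lemma dd: "d (d a) = 0" using dg unfolding dg_algebra_def by blast
lemma leib: "a \<in> G n \<Longrightarrow> d (a * b) = d a * b + (if even n then a * d b else - (a * d b))"
  using dg unfolding dg_algebra_def by blast

lemma d0: "d 0 = 0" using dadd[of 0 0] by simp
lemma dneg: "d (- a) = - d a"
proof -
  have "d a + d (- a) = 0" using dadd[of a "-a"] d0 by simp
  thus ?thesis by (simp add: add_eq_0_iff2)
qed
lemma ddiff: "d (a - b) = d a - d b" using dadd[of a "-b"] dneg by simp
lemma dsum: "finite A \<Longrightarrow> d (sum f A) = (\<Sum>i\<in>A. d (f i))"
  by (induction A rule: finite_induct) (simp_all add: d0 dadd)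

sublocale U: grs G UNIV
proof
  show "graded_ring G" by (rule grG)
  fix a :: 'a
  show "\<exists>c. graded_decomp (\<lambda>n. G n \<inter> UNIV) a c" using grG unfolding graded_ring_def by simp
qed auto

lemma UH: "U.H n = G n" by (simp add: U.H_def)

lemma dcomp: "U.cmp n (d x) = d (U.cmp (n - 1) x)"
proof (rule U.decomp_intro[where c="\<lambda>n. d (U.cmp (n - 1) x)" and U="(\<lambda>m. m + 1) ` {n. U.cmp n x \<noteq> 0}"])
  show "finite ((\<lambda>m. m + 1) ` {n. U.cmp n x \<noteq> 0})" using U.comp_fin by simp
  show "d (U.cmp (n - 1) x) = 0" if "n \<notin> (\<lambda>m. m + 1) ` {n. U.cmp n x \<noteq> 0}" for n
  proof -
    have "U.cmp (n - 1) x = 0" using that by (metis (mono_tags) diff_add_cancel image_eqI mem_Collect_eq)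
    thus ?thesis using d0 by simp
  qed
  show "d (U.cmp (n - 1) x) \<in> U.H n" for n
  proof -
    have "U.cmp (n - 1) x \<in> G (n - 1)" using U.comp_H[of x "n - 1"] UH by simp
    hence "d (U.cmp (n - 1) x) \<in> G (n - 1 + 1)" by (rule dG)
    thus ?thesis using UH by simp
  qed
  have "(\<Sum>n\<in>(\<lambda>m. m + 1) ` {n. U.cmp n x \<noteq> 0}. d (U.cmp (n - 1) x)) = (\<Sum>m\<in>{n. U.cmp n x \<noteq> 0}. d (U.cmp m x))"
    by (subst sum.reindex) (auto simp: inj_on_def)
  also have "\<dots> = d (\<Sum>m\<in>{n. U.cmp n x \<noteq> 0}. U.cmp m x)" using dsum[OF U.comp_fin[of x], of "\<lambda>m. U.cmp m x"] by simp
  also have "\<dots> = d x" using U.comp_sum[of x "{n. U.cmp n x \<noteq> 0}"] U.comp_fin by simp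
  finally show "d x = (\<Sum>n\<in>(\<lambda>m. m + 1) ` {n. U.cmp n x \<noteq> 0}. d (U.cmp (n - 1) x))" by simp
qed

definition Z where "Z = {a. d a = 0}"

lemma Zcomp: "a \<in> Z \<Longrightarrow> d (U.cmp n a) = 0"
  using dcomp[of "n + 1" a] U.comp_zero unfolding Z_def by simp

lemma d1: "d 1 = 0"
  using leib[OF U.G1, of 1] by simp

lemma Zmul: assumes "a \<in> Z" "b \<in> Z" shows "a * b \<in> Z"
proof -
  let ?U = "{n. U.cmp n a \<noteq> 0}"
  have db: "d b = 0" using assms unfolding Z_def by simp
  have "a * b = (\<Sum>n\<in>?U. U.cmp n a) * b" using U.comp_sum[of a ?U] U.comp_fin by simp
  also have "\<dots> = (\<Sum>n\<in>?U. U.cmp n a * b)" by (simp add: sum_distrib_right)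
  finally have "d (a * b) = (\<Sum>n\<in>?U. d (U.cmp n a * b))" using dsum[OF U.comp_fin[of a], of "\<lambda>n. U.cmp n a * b"] by simp
  also have "\<dots> = (\<Sum>n\<in>?U. d (U.cmp n a) * b)"
  proof (rule sum.cong[OF refl])
    fix n
    have "U.cmp n a \<in> G n" using U.comp_H[of a n] UH by simp
    thus "d (U.cmp n a * b) = d (U.cmp n a) * b" using leib[of "U.cmp n a" n b] db by simp
  qed
  also have "\<dots> = 0" using Zcomp[OF assms(1)] by simp
  finally show ?thesis unfolding Z_def by simp
qed

sublocale Zr: grs G Z
proof
  show "graded_ring G" by (rule grG)
  show "1 \<in> Z" using d1 unfolding Z_def by simp
  show "\<And>x y. x \<in> Z \<Longrightarrow> y \<in> Z \<Longrightarrow> x + y \<in> Z" unfolding Z_def using dadd by simp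
  show "\<And>x. x \<in> Z \<Longrightarrow> - x \<in> Z" unfolding Z_def using dneg by simp
  show "\<And>x y. x \<in> Z \<Longrightarrow> y \<in> Z \<Longrightarrow> x * y \<in> Z" by (rule Zmul)
  fix a assume aZ: "a \<in> Z"
  have "graded_decomp (\<lambda>n. G n \<inter> Z) a (\<lambda>n. U.cmp n a)"
    using U.comp_ex[of a] Zcomp[OF aZ] unfolding graded_decomp_def U.H_def Z_def by auto
  thus "\<exists>c. graded_decomp (\<lambda>n. G n \<inter> Z) a c" by blast
qed

lemma Zcmp: assumes "a \<in> Z" shows "Zr.cmp n a = U.cmp n a"
proof -
  have dec: "graded_decomp Zr.H a (\<lambda>n. Zr.cmp n a)" using Zr.comp_ex[OF assms] .
  show ?thesis
    by (rule U.decomp_intro[where U="{n. Zr.cmp n a \<noteq> 0}", symmetric])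
      (use dec in \<open>auto simp: graded_decomp_def Zr.H_def UH\<close>)
qed

lemma dgI: "dg_ideal G d I \<Longrightarrow> U.gl I"
  unfolding dg_ideal_def using U.gl_eq by blast
lemma dgD: "dg_ideal G d I \<Longrightarrow> x \<in> I \<Longrightarrow> d x \<in> I"
  unfolding dg_ideal_def by blast

lemma glZ1: assumes "dg_ideal G d I" shows "Zr.gl (I \<inter> Z)"
proof -
  have g: "U.gl I" using dgI[OF assms] .
  have l: "U.lideal I" using U.gl_lideal[OF g] .
  have "Zr.lideal (I \<inter> Z)" unfolding Zr.lideal_def
  proof (intro conjI ballI)
    show "I \<inter> Z \<subseteq> Z" by blast
    show "0 \<in> I \<inter> Z" using U.lideal_0[OF l] d0 unfolding Z_def by simp
    show "x + y \<in> I \<inter> Z" if "x \<in> I \<inter> Z" "y \<in> I \<inter> Z" for x y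
      using that U.lideal_add[OF l] Zr.Sadd by blast
    show "s * x \<in> I \<inter> Z" if "s \<in> Z" "x \<in> I \<inter> Z" for s x
      using that U.lideal_mul[OF l] Zmul by blast
  qed
  moreover have "\<forall>a\<in>I \<inter> Z. \<forall>n. Zr.cmp n a \<in> I \<inter> Z"
    using Zcmp U.gl_comp[OF g] Zr.comp_S by simp
  ultimately show ?thesis unfolding Zr.gl_def by blast
qed

lemma glZ2: assumes "dg_ideal G d I" shows "Zr.gl (d ` I)"
proof -
  have g: "U.gl I" using dgI[OF assms] .
  have l: "U.lideal I" using U.gl_lideal[OF g] .
  have z: "0 \<in> d ` I" using U.lideal_0[OF l] d0 by (metis image_eqI)
  have ad: "x + y \<in> d ` I" if xy: "x \<in> d ` I" "y \<in> d ` I" for x y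
  proof -
    obtain x' y' where "x' \<in> I" "y' \<in> I" "x = d x'" "y = d y'" using xy by blast
    hence "x' + y' \<in> I" "x + y = d (x' + y')" using U.lideal_add[OF l] dadd by auto
    thus ?thesis by blast
  qed
  have "Zr.lideal (d ` I)" unfolding Zr.lideal_def
  proof (intro conjI ballI)
    show "d ` I \<subseteq> Z" unfolding Z_def using dd by auto
    show "0 \<in> d ` I" by (rule z)
    show "x + y \<in> d ` I" if "x \<in> d ` I" "y \<in> d ` I" for x y using ad that .
    show "s * x \<in> d ` I" if sZ: "s \<in> Z" and xd: "x \<in> d ` I" for s x
    proof -
      obtain y where y: "y \<in> I" "x = d y" using xd by blast
      let ?U = "{n. U.cmp n s \<noteq> 0}"
      have "s * x = (\<Sum>n\<in>?U. U.cmp n s) * x" using U.comp_sum[of s ?U] U.comp_fin by simp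
      also have "\<dots> = (\<Sum>n\<in>?U. U.cmp n s * x)" by (simp add: sum_distrib_right)
      also have "\<dots> \<in> d ` I"
      proof -
        have fin: "finite ?U" using U.comp_fin[of s] by simp
        have all: "\<forall>n\<in>?U. U.cmp n s * x \<in> d ` I"
        proof
          fix n
          have cH: "U.cmp n s \<in> G n" using U.comp_H UH by blast
          have e: "d (U.cmp n s * y) = (if even n then U.cmp n s * x else - (U.cmp n s * x))"
            using leib[OF cH, of y] Zcomp[OF sZ] y by simp
          show "U.cmp n s * x \<in> d ` I"
          proof (cases "even n")
            case True
            hence "U.cmp n s * x = d (U.cmp n s * y)" using e by simp
            thus ?thesis using U.lideal_mul[OF l _ y(1)] by blast
          next
            case False
            hence "U.cmp n s * x = d (- (U.cmp n s * y))" using e dneg by simp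
            thus ?thesis using U.lideal_mul[OF l _ y(1)] U.lideal_neg[OF l] by blast
          qed
        qed
        show ?thesis using sum_closed_gen[of "d ` I", OF z ad fin all] .
      qed
      finally show ?thesis .
    qed
  qed
  moreover have "\<forall>a\<in>d ` I. \<forall>n. Zr.cmp n a \<in> d ` I"
  proof (intro ballI allI)
    fix a n assume "a \<in> d ` I"
    then obtain y where y: "y \<in> I" "a = d y" by blast
    have "a \<in> Z" using y dd unfolding Z_def by simp
    hence "Zr.cmp n a = d (U.cmp (n - 1) y)" using Zcmp dcomp y by simp
    thus "Zr.cmp n a \<in> d ` I" using U.gl_comp[OF g y(1)] by blast
  qed
  ultimately show ?thesis unfolding Zr.gl_def by blast
qed

lemma transfer: assumes "dg_ideal G d I" "dg_ideal G d I'" "I \<subseteq> I'"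
  "I \<inter> Z = I' \<inter> Z" "d ` I = d ` I'" shows "I' \<subseteq> I"
proof
  fix x assume x: "x \<in> I'"
  have l': "U.lideal I'" using U.gl_lideal[OF dgI[OF assms(2)]] .
  have l: "U.lideal I" using U.gl_lideal[OF dgI[OF assms(1)]] .
  have "d x \<in> d ` I" using x assms(5) by blast
  then obtain y where y: "y \<in> I" "d x = d y" by blast
  have "x - y \<in> I'" using U.lideal_diff[OF l' x] y assms(3) by blast
  moreover have "d (x - y) = 0" using y ddiff by simp
  ultimately have "x - y \<in> I" using assms(4) unfolding Z_def by blast
  hence "(x - y) + y \<in> I" using U.lideal_add[OF l] y by blast
  thus "x \<in> I" by simp
qed

end

theorem proposition2p4:
  fixes phi :: "'r::comm_ring_1 \<Rightarrow> 'a::ring_1"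
    and G :: "int \<Rightarrow> 'a set"
    and d :: "'a \<Rightarrow> 'a"
  assumes "dg_algebra phi G d"
    and "graded_artinian G {a. d a = 0}"
  shows "dg_noetherian G d \<and> dg_artinian G d"
proof -
  interpret dgctx phi G d by (rule dgctx.intro[OF assms(1)])
  have art: "graded_artinian G Z" using assms(2) unfolding Z_def .
  have acc: "\<forall>f. (\<forall>k. Zr.gl (f k)) \<and> (\<forall>k. f k \<subseteq> f (Suc k)) \<longrightarrow> (\<exists>N. \<forall>k\<ge>N. f k = f N)"
    using Zr.acc[OF art] .
  have dcc: "Zr.artgl" using Zr.art_gl[OF art] .
  have noeth: "dg_noetherian G d"
    unfolding dg_noetherian_def
  proof (intro allI impI, elim conjE)
    fix f :: "nat \<Rightarrow> 'a set" assume f1: "\<forall>k. dg_ideal G d (f k)" and f2: "\<forall>k. f k \<subseteq> f (Suc k)"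
    have mono: "\<And>i j. i \<le> j \<Longrightarrow> f i \<subseteq> f j" using f2 lift_Suc_mono_le[of f] by blast
    have "\<exists>N. \<forall>k\<ge>N. f k \<inter> Z = f N \<inter> Z"
      using acc[rule_format, of "\<lambda>k. f k \<inter> Z"] glZ1 f1 f2 by blast
    then obtain N1 where n1: "\<forall>k\<ge>N1. f k \<inter> Z = f N1 \<inter> Z" ..
    have "\<exists>N. \<forall>k\<ge>N. d ` f k = d ` f N"
      using acc[rule_format, of "\<lambda>k. d ` f k"] glZ2 f1 f2 by (metis image_mono)
    then obtain N2 where n2: "\<forall>k\<ge>N2. d ` f k = d ` f N2" ..
    have "f k = f (max N1 N2)" if "k \<ge> max N1 N2" for k
    proof
      show "f (max N1 N2) \<subseteq> f k" using mono that by blast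
      have a: "f k \<inter> Z = f (max N1 N2) \<inter> Z" using n1 that by (metis max.boundedE max.cobounded1)
      have b: "d ` f k = d ` f (max N1 N2)" using n2 that by (metis max.boundedE max.cobounded2)
      show "f k \<subseteq> f (max N1 N2)"
        by (rule transfer[OF f1[rule_format] f1[rule_format] mono[OF that]]) (use a b in simp_all)
    qed
    thus "\<exists>N. \<forall>k\<ge>N. f k = f N" by blast
  qed
  have artin: "dg_artinian G d"
    unfolding dg_artinian_def
  proof (intro allI impI, elim conjE)
    fix f :: "nat \<Rightarrow> 'a set" assume f1: "\<forall>k. dg_ideal G d (f k)" and f2: "\<forall>k. f (Suc k) \<subseteq> f k"
    have mono: "\<And>i j. i \<le> j \<Longrightarrow> f j \<subseteq> f i" using f2 lift_Suc_antimono_le[of f] by blast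
    have "\<exists>N. \<forall>k\<ge>N. f k \<inter> Z = f N \<inter> Z"
      by (rule Zr.artglD[OF dcc]) (use glZ1 f1 f2 in auto)
    then obtain N1 where n1: "\<forall>k\<ge>N1. f k \<inter> Z = f N1 \<inter> Z" ..
    have "\<exists>N. \<forall>k\<ge>N. d ` f k = d ` f N"
      by (rule Zr.artglD[OF dcc]) (simp_all add: glZ2 f1 image_mono f2[rule_format])
    then obtain N2 where n2: "\<forall>k\<ge>N2. d ` f k = d ` f N2" ..
    have "f k = f (max N1 N2)" if "k \<ge> max N1 N2" for k
    proof
      show "f k \<subseteq> f (max N1 N2)" using mono that by blast
      have a: "f k \<inter> Z = f (max N1 N2) \<inter> Z" using n1 that by (metis max.boundedE max.cobounded1)
      have b: "d ` f k = d ` f (max N1 N2)" using n2 that by (metis max.boundedE max.cobounded2)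
      show "f (max N1 N2) \<subseteq> f k"
        by (rule transfer[OF f1[rule_format] f1[rule_format] mono[OF that]]) (use a b in simp_all)
    qed
    thus "\<exists>N. \<forall>k\<ge>N. f k = f N" by blast
  qed
  show ?thesis using noeth artin by blast
qed


end
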